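(* In the setting described in the context, with probability $1-o(1)$ (as $m\to\infty$), we have for all $c\in C$ that $|g(c)|\le\frac{m}{\sqrt q}\log m$.
   Context: Two agents $a,b$, $m$ items, unknown utilities $u^a_i,u^b_i\in[0,1]$, additive. For an allocation (partition $(\mathcal{A}_a,\mathcal{A}_b)$ of $[m]$), $\mathrm{Envy}_{a\to b}=\sum_{i\in\mathcal{A}_b}u^a_i-\sum_{i\in\mathcal{A}_a}u^a_i$, $\mathrm{Envy}_{b\to a}=\sum_{i\in\mathcal{A}_a}u^b_i-\sum_{i\in\mathcal{A}_b}u^b_i$, $\mathrm{Envy}=\max$ of the two; assume $\min_{\mathcal{A}}\mathrm{Envy}(\mathcal{A})\le-\Delta$, with $\Delta=\Delta(m)$, $\Delta\ge m^{1/4}\log^2m$, $\Delta=o(m/\log m)$. Noise variance is $\sigma^2=1$ and $q=m\lceil15\frac{m^{3/2}}{\Delta^2}\log m+\log^2m\rceil$. Each item $i$ is queried $q/m$ times, each query returning independent $y^a\sim N(u^a_i,1)$, $y^b\sim N(u^b_i,1)$, and $v^\nu_i$ is the average of agent $\nu$'s observations for item $i$ (so $v^\nu_i\sim N(u^\nu_i,m/q)$, all independent). For $c>0$, $x_i(c)=1$ if $cv^a_i>v^b_i$ and $x_i(c)=-1$ otherwise; $e_a(c)=-\sum_ix_i(c)u^a_i$, $e_b(c)=\sum_ix_i(c)u^b_i$, $e'_a(c)=-\sum_ix_i(c)v^a_i$, $e'_b(c)=\sum_ix_i(c)v^b_i$; $g(c)=\frac1{1+c}\big(e_a(c)-e'_a(c)-ce_b(c)+ce'_b(c)\big)$.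 $C=\{k/m^3:k=1,2,\dots,m^6\}$. $\log$ is natural. *)

theory Defs
  imports "HOL-Probability.Probability" "HOL-Library.Landau_Symbols"
begin

text \<open>Items are indexed by {..<m}. An allocation is given by the set A of items
  assigned to agent a; agent b receives the complement {..<m} - A.\<close>

definition envy_ab :: "nat \<Rightarrow> (nat \<Rightarrow> real) \<Rightarrow> nat set \<Rightarrow> real" where
  "envy_ab m ua A = (\<Sum>i\<in>{..<m} - A. ua i) - (\<Sum>i\<in>A. ua i)"

definition envy_ba :: "nat \<Rightarrow> (nat \<Rightarrow> real) \<Rightarrow> nat set \<Rightarrow> real" where
  "envy_ba m ub A = (\<Sum>i\<in>A. ub i) - (\<Sum>i\<in>{..<m} - A. ub i)"

definition envy :: "nat \<Rightarrow> (nat \<Rightarrow> real) \<Rightarrow> (nat \<Rightarrow> real) \<Rightarrow> nat set \<Rightarrow> real" where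
  "envy m ua ub A = max (envy_ab m ua A) (envy_ba m ub A)"

definition nqueries :: "nat \<Rightarrow> real \<Rightarrow> real" where
  "nqueries m D = real m * of_int \<lceil>15 * (real m powr (3/2) / D ^ 2) * ln (real m) + (ln (real m))^2\<rceil>"

definition xsel :: "real \<Rightarrow> (nat \<Rightarrow> real) \<Rightarrow> (nat \<Rightarrow> real) \<Rightarrow> nat \<Rightarrow> real" where
  "xsel c va vb i = (if c * va i > vb i then 1 else -1)"

definition gfun :: "nat \<Rightarrow> (nat \<Rightarrow> real) \<Rightarrow> (nat \<Rightarrow> real) \<Rightarrow> (nat \<Rightarrow> real) \<Rightarrow> (nat \<Rightarrow> real)
    \<Rightarrow> real \<Rightarrow> real" where
  "gfun m ua ub va vb c =
     (let ea  = - (\<Sum>i<m. xsel c va vb i * ua i);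
          eb  =   (\<Sum>i<m. xsel c va vb i * ub i);
          ea' = - (\<Sum>i<m. xsel c va vb i * va i);
          eb' =   (\<Sum>i<m. xsel c va vb i * vb i)
      in (1 / (1 + c)) * (ea - ea' - c * eb + c * eb'))"

definition Cgrid :: "nat \<Rightarrow> real set" where
  "Cgrid m = (\<lambda>k. real k / real m ^ 3) ` {1..m ^ 6}"

text \<open>Joint law of the averaged observations (v^a_i, v^b_i), i < m: independent,
  v^nu_i ~ N(u^nu_i, m/q) (normal_density takes the standard deviation).\<close>
definition obs_measure :: "nat \<Rightarrow> (nat \<Rightarrow> real) \<Rightarrow> (nat \<Rightarrow> real) \<Rightarrow> real \<Rightarrow> (nat \<Rightarrow> real \<times> real) measure" where
  "obs_measure m ua ub q =
     (\<Pi>\<^sub>M i\<in>{..<m}. density lborel (normal_density (ua i) (sqrt (real m / q)))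
                  \<Otimes>\<^sub>M density lborel (normal_density (ub i) (sqrt (real m / q))))"

end

theory Submission
  imports Defs "HOL-Real_Asymp.Real_Asymp"
begin

lemma cov2:
  fixes c ua ub :: real and G :: "real \<Rightarrow> real \<Rightarrow> ennreal"
  assumes c: "c > 0" and G[measurable]: "case_prod G \<in> borel_measurable (lborel \<Otimes>\<^sub>M lborel)"
  shows "(\<integral>\<^sup>+a. \<integral>\<^sup>+b. G a b \<partial>lborel \<partial>lborel) = ennreal (1/(1+c\<^sup>2)) *
    (\<integral>\<^sup>+w. \<integral>\<^sup>+z. G (ua + (c*w+z)/(1+c\<^sup>2)) (ub + c*((c*w+z)/(1+c\<^sup>2)) - w) \<partial>lborel \<partial>lborel)"
proof -
  have Gm: "G a \<in> borel_measurable borel" for a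
    using measurable_Pair2[OF G, of a] by (simp add: measurable_lborel2 borel_prod[symmetric])
  have s1: "(\<integral>\<^sup>+b. G a b \<partial>lborel) = (\<integral>\<^sup>+w. G a ((ub + c*(a-ua)) + (-1)*w) \<partial>lborel)" for a
    using nn_integral_real_affine[OF Gm[of a], of "-1" "ub + c*(a-ua)"] by simp
  have "(\<integral>\<^sup>+a. \<integral>\<^sup>+b. G a b \<partial>lborel \<partial>lborel) = (\<integral>\<^sup>+a. \<integral>\<^sup>+w. G a ((ub + c*(a-ua)) + (-1)*w) \<partial>lborel \<partial>lborel)"
    using s1 by simp
  also have "\<dots> = (\<integral>\<^sup>+w. \<integral>\<^sup>+a. G a ((ub + c*(a-ua)) + (-1)*w) \<partial>lborel \<partial>lborel)"
    by (rule lborel_pair.Fubini'[symmetric]) measurable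
  also have "\<dots> = (\<integral>\<^sup>+w. ennreal (1/(1+c\<^sup>2)) * \<integral>\<^sup>+z. G (ua + (c*w+z)/(1+c\<^sup>2)) (ub + c*((c*w+z)/(1+c\<^sup>2)) - w) \<partial>lborel \<partial>lborel)"
  proof (rule nn_integral_cong)
    fix w :: real
    have m: "(\<lambda>a. G a ((ub + c*(a-ua)) + (-1)*w)) \<in> borel_measurable borel"
      using G by (simp add: measurable_lborel2 borel_prod[symmetric])
    have pos: "1 + c\<^sup>2 > 0" by (simp add: add_pos_nonneg)
    have "(\<integral>\<^sup>+a. G a ((ub + c*(a-ua)) + (-1)*w) \<partial>lborel) = ennreal \<bar>1/(1+c\<^sup>2)\<bar> *
        (\<integral>\<^sup>+z. G ((ua + c*w/(1+c\<^sup>2)) + 1/(1+c\<^sup>2) * z) ((ub + c*(((ua + c*w/(1+c\<^sup>2)) + 1/(1+c\<^sup>2) * z)-ua)) + (-1)*w) \<partial>lborel)"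
      using nn_integral_real_affine[OF m, of "1/(1+c\<^sup>2)" "ua + c*w/(1+c\<^sup>2)"] pos by simp
    also have "\<dots> = ennreal (1/(1+c\<^sup>2)) * \<integral>\<^sup>+z. G (ua + (c*w+z)/(1+c\<^sup>2)) (ub + c*((c*w+z)/(1+c\<^sup>2)) - w) \<partial>lborel"
      using pos by (simp add: add_divide_distrib algebra_simps)
    finally show "(\<integral>\<^sup>+a. G a ((ub + c*(a-ua)) + (-1)*w) \<partial>lborel) = ennreal (1/(1+c\<^sup>2)) * \<integral>\<^sup>+z. G (ua + (c*w+z)/(1+c\<^sup>2)) (ub + c*((c*w+z)/(1+c\<^sup>2)) - w) \<partial>lborel" .
  qed
  also have "\<dots> = ennreal (1/(1+c\<^sup>2)) * (\<integral>\<^sup>+w. \<integral>\<^sup>+z. G (ua + (c*w+z)/(1+c\<^sup>2)) (ub + c*((c*w+z)/(1+c\<^sup>2)) - w) \<partial>lborel \<partial>lborel)"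
    by (rule nn_integral_cmult) measurable
  finally show ?thesis .
qed

lemma nn_integral_normal_density_one:
  assumes "\<tau> > 0"
  shows "(\<integral>\<^sup>+z. ennreal (normal_density \<mu> \<tau> z) \<partial>lborel) = 1"
  using assms by (subst nn_integral_eq_integral) (auto simp: normal_density_nonneg)

lemma nd_shift:
  assumes "\<tau> > 0"
  shows "normal_density 0 \<tau> z * exp (\<mu> * z) = exp (\<mu>\<^sup>2 * \<tau>\<^sup>2 / 2) * normal_density (\<mu> * \<tau>\<^sup>2) \<tau> z"
proof -
  have "-(z - 0)\<^sup>2 / (2 * \<tau>\<^sup>2) + \<mu> * z = \<mu>\<^sup>2 * \<tau>\<^sup>2 / 2 + (-(z - \<mu> * \<tau>\<^sup>2)\<^sup>2 / (2 * \<tau>\<^sup>2))"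
    using assms by (simp add: field_simps power2_eq_square)
  then have "exp (-(z - 0)\<^sup>2 / (2 * \<tau>\<^sup>2)) * exp (\<mu> * z) = exp (\<mu>\<^sup>2 * \<tau>\<^sup>2 / 2) * exp (-(z - \<mu> * \<tau>\<^sup>2)\<^sup>2 / (2 * \<tau>\<^sup>2))"
    by (metis exp_add)
  then show ?thesis unfolding normal_density_def by (simp add: mult_ac)
qed

lemma gauss_mgf:
  assumes "\<tau> > 0"
  shows "(\<integral>\<^sup>+z. ennreal (normal_density 0 \<tau> z * exp (\<mu> * z)) \<partial>lborel) = ennreal (exp (\<mu>\<^sup>2 * \<tau>\<^sup>2 / 2))"
proof -
  have "(\<integral>\<^sup>+z. ennreal (normal_density 0 \<tau> z * exp (\<mu> * z)) \<partial>lborel) =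
        (\<integral>\<^sup>+z. ennreal (exp (\<mu>\<^sup>2 * \<tau>\<^sup>2 / 2)) * ennreal (normal_density (\<mu> * \<tau>\<^sup>2) \<tau> z) \<partial>lborel)"
    using assms by (intro nn_integral_cong) (simp add: nd_shift ennreal_mult normal_density_nonneg)
  also have "\<dots> = ennreal (exp (\<mu>\<^sup>2 * \<tau>\<^sup>2 / 2)) * (\<integral>\<^sup>+z. ennreal (normal_density (\<mu> * \<tau>\<^sup>2) \<tau> z) \<partial>lborel)"
    by (rule nn_integral_cmult) measurable
  also have "\<dots> = ennreal (exp (\<mu>\<^sup>2 * \<tau>\<^sup>2 / 2))"
    using nn_integral_normal_density_one[OF assms] by simp
  finally show ?thesis .
qed

lemma nd_prod:
  assumes "\<sigma> > 0"
  shows "normal_density \<mu> \<sigma> x * normal_density \<mu>' \<sigma> y = exp (-((x-\<mu>)\<^sup>2 + (y-\<mu>')\<^sup>2) / (2*\<sigma>\<^sup>2)) / (2*pi*\<sigma>\<^sup>2)"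
proof -
  have "sqrt (2*pi*\<sigma>\<^sup>2) * sqrt (2*pi*\<sigma>\<^sup>2) = 2*pi*\<sigma>\<^sup>2" by simp
  moreover have "exp (-(x-\<mu>)\<^sup>2 / (2*\<sigma>\<^sup>2)) * exp (-(y-\<mu>')\<^sup>2 / (2*\<sigma>\<^sup>2)) = exp (-((x-\<mu>)\<^sup>2 + (y-\<mu>')\<^sup>2) / (2*\<sigma>\<^sup>2))"
    by (simp add: exp_add[symmetric] diff_divide_distrib)
  ultimately show ?thesis unfolding normal_density_def
    by (simp add: field_simps)
qed

lemma pointwise_id:
  fixes c \<sigma> ua ub w z l :: real
  assumes c: "c > 0" and \<sigma>: "\<sigma> > 0"
  defines "q0 \<equiv> (c*w+z)/(1+c\<^sup>2)"
  defines "\<tau> \<equiv> \<sigma> * sqrt (1+c\<^sup>2)"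
  shows "normal_density ua \<sigma> (ua + q0) * normal_density ub \<sigma> (ub + c * q0 - w) *
           exp (l * ((if c * (ua + q0) > ub + c * q0 - w then 1 else -1) * (((ua + q0) - ua) + c*((ub + c * q0 - w) - ub))))
         = (1+c\<^sup>2) * (normal_density 0 \<tau> w * (normal_density 0 \<tau> z * exp ((l * (if w > ub - c*ua then 1 else -1)) * z)))"
proof -
  have p: "1 + c\<^sup>2 > 0" by (simp add: add_pos_nonneg)
  have t2: "\<tau>\<^sup>2 = \<sigma>\<^sup>2 * (1+c\<^sup>2)" unfolding \<tau>_def using p by (simp add: power_mult_distrib)
  have tpos: "\<tau> > 0" unfolding \<tau>_def using p \<sigma> by simp
  have cond: "(c * (ua + q0) > ub + c * q0 - w) = (w > ub - c*ua)" by (auto simp: algebra_simps)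
  have hz: "((ua + q0) - ua) + c*((ub + c * q0 - w) - ub) = z"
  proof -
    have "(1+c\<^sup>2) * q0 = c*w+z" unfolding q0_def using p by simp
    then show ?thesis by (simp add: algebra_simps power2_eq_square)
  qed
  have sq: "q0\<^sup>2 + (c * q0 - w)\<^sup>2 = (w\<^sup>2 + z\<^sup>2) / (1+c\<^sup>2)"
  proof -
    have P: "(1+c\<^sup>2) * q0 = c*w+z" unfolding q0_def using p by simp
    have "(1+c\<^sup>2)*(q0\<^sup>2 + (c * q0 - w)\<^sup>2) = ((1+c\<^sup>2)*q0)\<^sup>2 - 2*c*w*((1+c\<^sup>2)*q0) + (1+c\<^sup>2)*w\<^sup>2"
      by algebra
    also have "\<dots> = w\<^sup>2 + z\<^sup>2" unfolding P by algebra
    finally show ?thesis using p by (simp add: field_simps)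
  qed
  have e: "-((ua + q0 - ua)\<^sup>2 + (ub + c * q0 - w - ub)\<^sup>2) / (2*\<sigma>\<^sup>2) = -((w - 0)\<^sup>2 + (z-0)\<^sup>2) / (2*\<tau>\<^sup>2)"
  proof -
    have "-((ua + q0 - ua)\<^sup>2 + (ub + c * q0 - w - ub)\<^sup>2) / (2*\<sigma>\<^sup>2) = -(q0\<^sup>2 + (c * q0 - w)\<^sup>2) / (2*\<sigma>\<^sup>2)"
      by simp
    also have "\<dots> = -((w\<^sup>2 + z\<^sup>2) / (1+c\<^sup>2)) / (2*\<sigma>\<^sup>2)" unfolding sq by simp
    also have "\<dots> = -(w\<^sup>2 + z\<^sup>2) / (2*(\<sigma>\<^sup>2*(1+c\<^sup>2)))" using p \<sigma> by (simp add: divide_simps)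
    finally show ?thesis unfolding t2 by simp
  qed
  have k: "1 / (2*pi*\<sigma>\<^sup>2) = (1+c\<^sup>2) * (1 / (2*pi*\<tau>\<^sup>2))"
  proof -
    have "pi * \<sigma>\<^sup>2 * (1+c\<^sup>2) > 0" using p \<sigma> by simp
    then show ?thesis unfolding t2 using p \<sigma> by (simp add: field_simps)
  qed
  have "normal_density ua \<sigma> (ua + q0) * normal_density ub \<sigma> (ub + c * q0 - w) =
        (1+c\<^sup>2) * (normal_density 0 \<tau> w * normal_density 0 \<tau> z)"
  proof -
    define E where "E = exp (-((w - 0)\<^sup>2 + (z-0)\<^sup>2) / (2*\<tau>\<^sup>2))"
    have "E / (2*pi*\<sigma>\<^sup>2) = E * (1 / (2*pi*\<sigma>\<^sup>2))" by simp
    also have "\<dots> = E * ((1+c\<^sup>2) * (1 / (2*pi*\<tau>\<^sup>2)))" by (simp only: k)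
    also have "\<dots> = (1+c\<^sup>2) * (E / (2*pi*\<tau>\<^sup>2))" by simp
    finally show ?thesis unfolding nd_prod[OF \<sigma>] nd_prod[OF tpos] e E_def .
  qed
  then show ?thesis unfolding cond hz by (simp add: mult_ac)
qed

lemma coord_mgf:
  fixes c \<sigma> ua ub l :: real
  assumes c: "c > 0" and \<sigma>: "\<sigma> > 0"
  shows "(\<integral>\<^sup>+x. ennreal (exp (l * ((if c * fst x > snd x then 1 else -1) * ((fst x - ua) + c * (snd x - ub)))))
           \<partial>(density lborel (normal_density ua \<sigma>) \<Otimes>\<^sub>M density lborel (normal_density ub \<sigma>)))
         = ennreal (exp (l\<^sup>2 * (\<sigma>\<^sup>2 * (1+c\<^sup>2)) / 2))"
proof -
  define Da where "Da = density lborel (normal_density ua \<sigma>)"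
  define Db where "Db = density lborel (normal_density ub \<sigma>)"
  define f where "f a b = ennreal (exp (l * ((if c * a > b then 1 else -1) * ((a - ua) + c * (b - ub)))))" for a b
  define \<tau> where "\<tau> = \<sigma> * sqrt (1+c\<^sup>2)"
  have p: "1 + c\<^sup>2 > 0" by (simp add: add_pos_nonneg)
  have t2: "\<tau>\<^sup>2 = \<sigma>\<^sup>2 * (1+c\<^sup>2)" unfolding \<tau>_def using p by (simp add: power_mult_distrib)
  have tpos: "\<tau> > 0" unfolding \<tau>_def using p \<sigma> by simp
  interpret Db: sigma_finite_measure Db
    unfolding Db_def by (rule prob_space_imp_sigma_finite, rule prob_space_normal_density, rule \<sigma>)
  have fm[measurable]: "case_prod f \<in> borel_measurable (lborel \<Otimes>\<^sub>M lborel)"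
    unfolding f_def by measurable
  have "(\<integral>\<^sup>+x. ennreal (exp (l * ((if c * fst x > snd x then 1 else -1) * ((fst x - ua) + c * (snd x - ub))))) \<partial>(Da \<Otimes>\<^sub>M Db))
      = (\<integral>\<^sup>+x. case_prod f x \<partial>(Da \<Otimes>\<^sub>M Db))"
    by (simp add: f_def case_prod_beta)
  also have "\<dots> = (\<integral>\<^sup>+a. \<integral>\<^sup>+b. f a b \<partial>Db \<partial>Da)"
  proof -
    have "case_prod f \<in> borel_measurable (Da \<Otimes>\<^sub>M Db)" unfolding Da_def Db_def by measurable
    from Db.nn_integral_fst[OF this] show ?thesis by simp
  qed
  also have "\<dots> = (\<integral>\<^sup>+a. ennreal (normal_density ua \<sigma> a) * \<integral>\<^sup>+b. ennreal (normal_density ub \<sigma> b) * f a b \<partial>lborel \<partial>lborel)"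
    unfolding Da_def Db_def
    by (subst nn_integral_density; (measurable)?; simp add: nn_integral_density)+
  also have "\<dots> = (\<integral>\<^sup>+a. \<integral>\<^sup>+b. ennreal (normal_density ua \<sigma> a * normal_density ub \<sigma> b *
        exp (l * ((if c * a > b then 1 else -1) * ((a - ua) + c * (b - ub))))) \<partial>lborel \<partial>lborel)"
    by (intro nn_integral_cong, subst nn_integral_cmult[symmetric])
       (auto simp: f_def ennreal_mult[symmetric] mult.assoc intro!: nn_integral_cong)
  also have "\<dots> = ennreal (1/(1+c\<^sup>2)) * (\<integral>\<^sup>+w. \<integral>\<^sup>+z.
        ennreal ((1+c\<^sup>2) * (normal_density 0 \<tau> w * (normal_density 0 \<tau> z * exp ((l * (if w > ub - c*ua then 1 else -1)) * z))))
        \<partial>lborel \<partial>lborel)"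
  proof (subst cov2[OF c, of _ ua ub])
    show "(\<lambda>(a, b). ennreal (normal_density ua \<sigma> a * normal_density ub \<sigma> b *
        exp (l * ((if c * a > b then 1 else -1) * ((a - ua) + c * (b - ub)))))) \<in> borel_measurable (lborel \<Otimes>\<^sub>M lborel)"
      by measurable
    show "ennreal (1/(1+c\<^sup>2)) * (\<integral>\<^sup>+w. \<integral>\<^sup>+z. ennreal (normal_density ua \<sigma> (ua + (c*w+z)/(1+c\<^sup>2)) * normal_density ub \<sigma> (ub + c*((c*w+z)/(1+c\<^sup>2)) - w) *
        exp (l * ((if c * (ua + (c*w+z)/(1+c\<^sup>2)) > (ub + c*((c*w+z)/(1+c\<^sup>2)) - w) then 1 else -1) *
          (((ua + (c*w+z)/(1+c\<^sup>2)) - ua) + c * ((ub + c*((c*w+z)/(1+c\<^sup>2)) - w) - ub))))) \<partial>lborel \<partial>lborel) =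
      ennreal (1/(1+c\<^sup>2)) * (\<integral>\<^sup>+w. \<integral>\<^sup>+z.
        ennreal ((1+c\<^sup>2) * (normal_density 0 \<tau> w * (normal_density 0 \<tau> z * exp ((l * (if w > ub - c*ua then 1 else -1)) * z))))
        \<partial>lborel \<partial>lborel)"
      unfolding \<tau>_def pointwise_id[OF c \<sigma>] ..
  qed
  also have "\<dots> = ennreal (1/(1+c\<^sup>2)) * (\<integral>\<^sup>+w. ennreal (1+c\<^sup>2) * (ennreal (normal_density 0 \<tau> w) * \<integral>\<^sup>+z.
        ennreal (normal_density 0 \<tau> z * exp ((l * (if w > ub - c*ua then 1 else -1)) * z))
        \<partial>lborel) \<partial>lborel)"
  proof (rule arg_cong2[where f="(*)"], rule refl, rule nn_integral_cong)
    fix w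
    define A where "A = normal_density 0 \<tau> w"
    define B where "B z = normal_density 0 \<tau> z * exp ((l * (if w > ub - c*ua then 1 else -1)) * z)" for z
    have A0: "A \<ge> 0" unfolding A_def by simp
    have B0: "B z \<ge> 0" for z unfolding B_def by simp
    have "(\<integral>\<^sup>+z. ennreal ((1+c\<^sup>2) * (A * B z)) \<partial>lborel) = (\<integral>\<^sup>+z. ennreal ((1+c\<^sup>2) * A) * ennreal (B z) \<partial>lborel)"
      using A0 B0 p by (intro nn_integral_cong) (simp add: ennreal_mult mult.assoc)
    also have "\<dots> = ennreal ((1+c\<^sup>2) * A) * (\<integral>\<^sup>+z. ennreal (B z) \<partial>lborel)"
      by (rule nn_integral_cmult) (simp add: B_def)
    also have "\<dots> = ennreal (1+c\<^sup>2) * (ennreal A * (\<integral>\<^sup>+z. ennreal (B z) \<partial>lborel))"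
      using A0 p by (simp add: ennreal_mult mult.assoc)
    finally show "(\<integral>\<^sup>+z. ennreal ((1+c\<^sup>2) * (normal_density 0 \<tau> w * (normal_density 0 \<tau> z * exp ((l * (if w > ub - c*ua then 1 else -1)) * z)))) \<partial>lborel)
       = ennreal (1+c\<^sup>2) * (ennreal (normal_density 0 \<tau> w) * \<integral>\<^sup>+z.
        ennreal (normal_density 0 \<tau> z * exp ((l * (if w > ub - c*ua then 1 else -1)) * z)) \<partial>lborel)"
      unfolding A_def B_def .
  qed
  also have "\<dots> = ennreal (1/(1+c\<^sup>2)) * (\<integral>\<^sup>+w. ennreal (1+c\<^sup>2) * (ennreal (normal_density 0 \<tau> w) * ennreal (exp (l\<^sup>2 * \<tau>\<^sup>2 / 2))) \<partial>lborel)"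
  proof (rule arg_cong2[where f="(*)"], rule refl, rule nn_integral_cong)
    fix w
    have sq1: "(l * (if w > ub - c*ua then 1 else -1))\<^sup>2 = l\<^sup>2" by (simp add: power_mult_distrib)
    show "ennreal (1+c\<^sup>2) * (ennreal (normal_density 0 \<tau> w) * \<integral>\<^sup>+z.
        ennreal (normal_density 0 \<tau> z * exp ((l * (if w > ub - c*ua then 1 else -1)) * z)) \<partial>lborel) =
        ennreal (1+c\<^sup>2) * (ennreal (normal_density 0 \<tau> w) * ennreal (exp (l\<^sup>2 * \<tau>\<^sup>2 / 2)))"
      by (simp only: gauss_mgf[OF tpos] sq1)
  qed
  also have "\<dots> = ennreal (1/(1+c\<^sup>2)) * (\<integral>\<^sup>+w. (ennreal (1+c\<^sup>2) * ennreal (exp (l\<^sup>2 * \<tau>\<^sup>2 / 2))) * ennreal (normal_density 0 \<tau> w) \<partial>lborel)"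
    by (simp only: mult_ac)
  also have "\<dots> = ennreal (1/(1+c\<^sup>2)) * ((ennreal (1+c\<^sup>2) * ennreal (exp (l\<^sup>2 * \<tau>\<^sup>2 / 2))) * \<integral>\<^sup>+w. ennreal (normal_density 0 \<tau> w) \<partial>lborel)"
    by (subst nn_integral_cmult) auto
  also have "\<dots> = ennreal (exp (l\<^sup>2 * \<tau>\<^sup>2 / 2))"
  proof -
    have inv: "ennreal (1/(1+c\<^sup>2)) * ennreal (1+c\<^sup>2) = 1"
      using p by (subst ennreal_mult[symmetric]) auto
    show ?thesis unfolding nn_integral_normal_density_one[OF tpos]
      by (simp only: mult.assoc[symmetric] mult_1_right inv mult_1)
  qed
  also have "\<dots> = ennreal (exp (l\<^sup>2 * (\<sigma>\<^sup>2 * (1+c\<^sup>2)) / 2))"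
    by (simp only: t2)
  finally show ?thesis unfolding Da_def Db_def .
qed

definition hc :: "real \<Rightarrow> real \<Rightarrow> real \<Rightarrow> real \<times> real \<Rightarrow> real" where
  "hc c a0 b0 x = (if c * fst x > snd x then 1 else -1) * ((fst x - a0) + c * (snd x - b0))"

lemma hc_measurable[measurable]: "hc c a0 b0 \<in> borel_measurable (M \<Otimes>\<^sub>M N)"
  if "sets M = sets borel" "sets N = sets borel" for M N
proof -
  have "sets (M \<Otimes>\<^sub>M N) = sets (borel \<Otimes>\<^sub>M (borel :: real measure))"
    using that by (intro sets_pair_measure_cong) auto
  moreover have "hc c a0 b0 \<in> borel_measurable (borel \<Otimes>\<^sub>M borel)"
    unfolding hc_def by measurable
  ultimately show ?thesis using measurable_cong_sets by blast
qed

definition Pm :: "(nat \<Rightarrow> real) \<Rightarrow> (nat \<Rightarrow> real) \<Rightarrow> real \<Rightarrow> nat \<Rightarrow> (real \<times> real) measure" where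
  "Pm ua ub \<sigma> i = density lborel (normal_density (ua i) \<sigma>) \<Otimes>\<^sub>M density lborel (normal_density (ub i) \<sigma>)"

lemma Pm_prob: "\<sigma> > 0 \<Longrightarrow> prob_space (Pm ua ub \<sigma> i)"
  unfolding Pm_def by (intro prob_space_pair prob_space_normal_density)

lemma sets_Pm: "sets (Pm ua ub \<sigma> i) = sets (borel \<Otimes>\<^sub>M borel)"
  unfolding Pm_def by (intro sets_pair_measure_cong) auto

lemma hc_Pm_measurable[measurable]: "hc c a0 b0 \<in> borel_measurable (Pm ua ub \<sigma> i)"
  unfolding Pm_def by (rule hc_measurable) auto

lemma chernoff1:
  fixes c \<sigma> l s T :: real and ua ub :: "nat \<Rightarrow> real" and m :: nat
  assumes c: "c > 0" and \<sigma>: "\<sigma> > 0" and l: "l > 0" and s: "s = 1 \<or> s = -1"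
  defines "M \<equiv> (\<Pi>\<^sub>M i\<in>{..<m}. Pm ua ub \<sigma> i)"
  shows "emeasure M {\<omega>\<in>space M. T \<le> s * (\<Sum>i<m. hc c (ua i) (ub i) (\<omega> i))}
          \<le> ennreal (exp (-l*T + real m * (l\<^sup>2 * (\<sigma>\<^sup>2 * (1+c\<^sup>2)) / 2)))"
proof -
  interpret P: product_sigma_finite "Pm ua ub \<sigma>"
    unfolding product_sigma_finite_def using prob_space_imp_sigma_finite[OF Pm_prob[OF \<sigma>]] by blast
  have hm[measurable]: "hc c (ua i) (ub i) \<in> borel_measurable (Pm ua ub \<sigma> i)" for i
    unfolding Pm_def by (rule hc_measurable) auto
  define A where "A = {\<omega>\<in>space M. T \<le> s * (\<Sum>i<m. hc c (ua i) (ub i) (\<omega> i))}"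
  have Am: "A \<in> sets M" unfolding A_def M_def by measurable
  have "emeasure M A = (\<integral>\<^sup>+\<omega>. indicator A \<omega> \<partial>M)" using Am by simp
  also have "\<dots> \<le> (\<integral>\<^sup>+\<omega>. ennreal (exp (-l*T)) * (\<Prod>i\<in>{..<m}. ennreal (exp ((l * s) * hc c (ua i) (ub i) (\<omega> i)))) \<partial>M)"
  proof (rule nn_integral_mono)
    fix \<omega> assume "\<omega> \<in> space M"
    have "(\<Prod>i\<in>{..<m}. ennreal (exp ((l * s) * hc c (ua i) (ub i) (\<omega> i)))) = ennreal (exp (\<Sum>i<m. (l * s) * hc c (ua i) (ub i) (\<omega> i)))"
      by (simp add: prod_ennreal exp_sum)
    then have eq: "ennreal (exp (-l*T)) * (\<Prod>i\<in>{..<m}. ennreal (exp ((l * s) * hc c (ua i) (ub i) (\<omega> i))))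
        = ennreal (exp (l * (s * (\<Sum>i<m. hc c (ua i) (ub i) (\<omega> i)) - T)))"
      by (simp add: ennreal_mult[symmetric] exp_add[symmetric] sum_distrib_left algebra_simps)
    show "indicator A \<omega> \<le> ennreal (exp (-l*T)) * (\<Prod>i\<in>{..<m}. ennreal (exp ((l * s) * hc c (ua i) (ub i) (\<omega> i))))"
      unfolding eq
    proof (cases "\<omega> \<in> A")
      case True
      then have "0 \<le> l * (s * (\<Sum>i<m. hc c (ua i) (ub i) (\<omega> i)) - T)" using l unfolding A_def by auto
      then show "indicator A \<omega> \<le> ennreal (exp (l * (s * (\<Sum>i<m. hc c (ua i) (ub i) (\<omega> i)) - T)))"
        using True by simp
    qed simp
  qed
  also have "\<dots> = ennreal (exp (-l*T)) * (\<integral>\<^sup>+\<omega>. (\<Prod>i\<in>{..<m}. ennreal (exp ((l * s) * hc c (ua i) (ub i) (\<omega> i)))) \<partial>M)"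
    by (rule nn_integral_cmult) (unfold M_def, measurable)
  also have "(\<integral>\<^sup>+\<omega>. (\<Prod>i\<in>{..<m}. ennreal (exp ((l * s) * hc c (ua i) (ub i) (\<omega> i)))) \<partial>M)
      = (\<Prod>i\<in>{..<m}. \<integral>\<^sup>+x. ennreal (exp ((l * s) * hc c (ua i) (ub i) x)) \<partial>Pm ua ub \<sigma> i)"
    unfolding M_def by (rule P.product_nn_integral_prod) auto
  also have "\<dots> = (\<Prod>i\<in>{..<m}. ennreal (exp (l\<^sup>2 * (\<sigma>\<^sup>2 * (1+c\<^sup>2)) / 2)))"
  proof (rule prod.cong[OF refl])
    fix i
    have "(l * s)\<^sup>2 = l\<^sup>2" using s by (auto simp: power_mult_distrib)
    then show "(\<integral>\<^sup>+x. ennreal (exp ((l * s) * hc c (ua i) (ub i) x)) \<partial>Pm ua ub \<sigma> i) = ennreal (exp (l\<^sup>2 * (\<sigma>\<^sup>2 * (1+c\<^sup>2)) / 2))"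
      using coord_mgf[OF c \<sigma>, of "ua i" "ub i" "l * s"] unfolding Pm_def hc_def by simp
  qed
  also have "\<dots> = ennreal (exp (real m * (l\<^sup>2 * (\<sigma>\<^sup>2 * (1+c\<^sup>2)) / 2)))"
    by (simp add: ennreal_power exp_of_nat_mult[symmetric] mult.assoc)
  finally show ?thesis unfolding A_def
    by (simp add: ennreal_mult[symmetric] exp_add[symmetric])
qed

lemma chernoff2:
  fixes c \<sigma> T :: real and ua ub :: "nat \<Rightarrow> real" and m :: nat
  assumes c: "c > 0" and \<sigma>: "\<sigma> > 0" and T: "T > 0" and m: "m > 0"
  defines "M \<equiv> (\<Pi>\<^sub>M i\<in>{..<m}. Pm ua ub \<sigma> i)"
  shows "measure M {\<omega>\<in>space M. T \<le> \<bar>\<Sum>i<m. hc c (ua i) (ub i) (\<omega> i)\<bar>}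
          \<le> 2 * exp (- T\<^sup>2 / (2 * real m * (\<sigma>\<^sup>2 * (1+c\<^sup>2))))"
proof -
  interpret M: prob_space M unfolding M_def by (intro prob_space_PiM Pm_prob[OF \<sigma>])
  define v where "v = \<sigma>\<^sup>2 * (1+c\<^sup>2)"
  have v: "v > 0" unfolding v_def using \<sigma> by (simp add: add_pos_nonneg)
  define l where "l = T / (real m * v)"
  have l: "l > 0" unfolding l_def using T v m by simp
  have ex: "-l*T + real m * (l\<^sup>2 * v / 2) = - T\<^sup>2 / (2 * real m * v)"
    unfolding l_def using v m by (simp add: field_simps power2_eq_square)
  define S where "S \<omega> = (\<Sum>i<m. hc c (ua i) (ub i) (\<omega> i))" for \<omega>
  have one: "measure M {\<omega>\<in>space M. T \<le> s * S \<omega>} \<le> exp (- T\<^sup>2 / (2 * real m * v))" if s: "s = 1 \<or> s = -1" for s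
  proof -
    have "emeasure M {\<omega>\<in>space M. T \<le> s * S \<omega>} \<le> ennreal (exp (- T\<^sup>2 / (2 * real m * v)))"
      using chernoff1[OF c \<sigma> l s, where T=T and ua=ua and ub=ub and m=m, folded v_def, unfolded ex] unfolding M_def S_def .
    then show ?thesis by (simp add: M.emeasure_eq_measure)
  qed
  have "{\<omega>\<in>space M. T \<le> \<bar>S \<omega>\<bar>} \<subseteq> {\<omega>\<in>space M. T \<le> 1 * S \<omega>} \<union> {\<omega>\<in>space M. T \<le> (-1) * S \<omega>}"
    by auto
  then have "measure M {\<omega>\<in>space M. T \<le> \<bar>S \<omega>\<bar>} \<le> measure M ({\<omega>\<in>space M. T \<le> 1 * S \<omega>} \<union> {\<omega>\<in>space M. T \<le> (-1) * S \<omega>})"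
    by (intro M.finite_measure_mono) (simp_all add: M_def S_def, measurable)
  also have "\<dots> \<le> measure M {\<omega>\<in>space M. T \<le> 1 * S \<omega>} + measure M {\<omega>\<in>space M. T \<le> (-1) * S \<omega>}"
    by (intro measure_Un_le) (simp_all add: M_def S_def, measurable)
  also have "\<dots> \<le> 2 * exp (- T\<^sup>2 / (2 * real m * v))"
    using one[of 1] one[of "-1"] by simp
  finally show ?thesis unfolding S_def v_def .
qed

lemma gfun_hc: "gfun m ua ub va vb c = (1/(1+c)) * (\<Sum>i<m. hc c (ua i) (ub i) (va i, vb i))"
  unfolding gfun_def Let_def hc_def xsel_def
  by (simp add: sum_negf sum_subtractf[symmetric] sum_distrib_left sum.distrib[symmetric] algebra_simps)

lemma card_Cgrid: "card (Cgrid m) \<le> m ^ 6"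
  unfolding Cgrid_def using card_image_le[of "{1..m^6}" "\<lambda>k. real k / real m ^ 3"] by simp

lemma Cgrid_pos: "c \<in> Cgrid m \<Longrightarrow> c > 0"
proof -
  assume "c \<in> Cgrid m"
  then obtain k where k: "k \<in> {1..m^6}" "c = real k / real m ^ 3" unfolding Cgrid_def by auto
  then have "m \<noteq> 0" by (cases "m = 0") auto
  then show "c > 0" using k by simp
qed

lemma alg_aux:
  fixes M q R Q L :: real
  assumes "M > 0" "q > 0" "R > 0"
  shows "Q * (M\<^sup>2 / q * L) / (2 * M * (M / q * R)) = Q / R * (L / 2)"
  using assms by (simp add: field_simps power2_eq_square)

lemma key:
  fixes ua ub :: "nat \<Rightarrow> real" and q :: real and m :: nat
  assumes m: "m \<ge> 2" and q: "q > 0"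
  shows "1 - 2 * real m ^ 6 * exp (- (ln (real m))\<^sup>2 / 2) \<le>
    measure (obs_measure m ua ub q) {\<omega> \<in> space (obs_measure m ua ub q). \<forall>c\<in>Cgrid m.
       \<bar>gfun m ua ub (\<lambda>i. fst (\<omega> i)) (\<lambda>i. snd (\<omega> i)) c\<bar> \<le> real m / sqrt q * ln (real m)}"
proof -
  define \<sigma> where "\<sigma> = sqrt (real m / q)"
  have \<sigma>: "\<sigma> > 0" unfolding \<sigma>_def using m q by simp
  define M where "M = (\<Pi>\<^sub>M i\<in>{..<m}. Pm ua ub \<sigma> i)"
  have OM: "obs_measure m ua ub q = M" unfolding obs_measure_def M_def Pm_def \<sigma>_def ..
  interpret M: prob_space M unfolding M_def by (intro prob_space_PiM Pm_prob[OF \<sigma>])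
  define B where "B = real m / sqrt q * ln (real m)"
  have lnm: "ln (real m) > 0" using m by simp
  have B: "B > 0" unfolding B_def using m q lnm by simp
  define S where "S c \<omega> = (\<Sum>i<m. hc c (ua i) (ub i) (\<omega> i))" for c \<omega>
  define bad where "bad c = {\<omega>\<in>space M. B < \<bar>(1/(1+c)) * S c \<omega>\<bar>}" for c
  have badm: "bad c \<in> sets M" for c unfolding bad_def S_def M_def by measurable
  have bad_le: "measure M (bad c) \<le> 2 * exp (- (ln (real m))\<^sup>2 / 2)" if c: "c \<in> Cgrid m" for c
  proof -
    have c0: "c > 0" using Cgrid_pos[OF c] .
    have "bad c \<subseteq> {\<omega>\<in>space M. (1+c)*B \<le> \<bar>S c \<omega>\<bar>}"
      unfolding bad_def using c0 by (auto simp: abs_mult field_simps)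
    then have "measure M (bad c) \<le> measure M {\<omega>\<in>space M. (1+c)*B \<le> \<bar>S c \<omega>\<bar>}"
      by (intro M.finite_measure_mono) (simp_all add: M_def S_def, measurable)
    also have "\<dots> \<le> 2 * exp (- ((1+c)*B)\<^sup>2 / (2 * real m * (\<sigma>\<^sup>2 * (1+c\<^sup>2))))"
      unfolding M_def S_def using chernoff2[OF c0 \<sigma>, of "(1+c)*B" m ua ub] c0 B m by simp
    also have "\<dots> \<le> 2 * exp (- (ln (real m))\<^sup>2 / 2)"
    proof -
      have s2: "\<sigma>\<^sup>2 = real m / q" unfolding \<sigma>_def using q by simp
      have B2: "B\<^sup>2 = (real m)\<^sup>2 / q * (ln (real m))\<^sup>2" unfolding B_def using q by (simp add: power_mult_distrib power_divide)
      have eq: "((1+c)*B)\<^sup>2 / (2 * real m * (\<sigma>\<^sup>2 * (1+c\<^sup>2))) = ((1+c)\<^sup>2/(1+c\<^sup>2)) * ((ln (real m))\<^sup>2 / 2)"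
      proof -
        have "((1+c)*B)\<^sup>2 = (1+c)\<^sup>2 * ((real m)\<^sup>2 / q * (ln (real m))\<^sup>2)" by (simp add: power_mult_distrib B2)
        moreover have "1 + c\<^sup>2 > 0" by (simp add: add_pos_nonneg)
        moreover have "real m > 0" using m by simp
        ultimately show ?thesis unfolding s2 using q alg_aux by presburger

      qed
      have r: "(1+c)\<^sup>2/(1+c\<^sup>2) \<ge> 1" using c0 by (simp add: field_simps power2_eq_square add_pos_nonneg)
      have "(ln (real m))\<^sup>2 / 2 \<le> ((1+c)\<^sup>2/(1+c\<^sup>2)) * ((ln (real m))\<^sup>2 / 2)"
        using mult_right_mono[OF r, of "(ln (real m))\<^sup>2 / 2"] by simp
      then have "- ((1+c)*B)\<^sup>2 / (2 * real m * (\<sigma>\<^sup>2 * (1+c\<^sup>2))) \<le> - (ln (real m))\<^sup>2 / 2"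
        unfolding minus_divide_left[symmetric] eq by simp
      then show ?thesis by simp
    qed
    finally show ?thesis .
  qed
  define E where "E = {\<omega> \<in> space M. \<forall>c\<in>Cgrid m.
       \<bar>gfun m ua ub (\<lambda>i. fst (\<omega> i)) (\<lambda>i. snd (\<omega> i)) c\<bar> \<le> B}"
  have E: "E = space M - (\<Union>c\<in>Cgrid m. bad c)"
    unfolding E_def bad_def S_def by (auto simp: gfun_hc not_less)
  have fin: "finite (Cgrid m)" unfolding Cgrid_def by simp
  have "measure M (\<Union>c\<in>Cgrid m. bad c) \<le> (\<Sum>c\<in>Cgrid m. measure M (bad c))"
    using fin badm by (intro M.finite_measure_subadditive_finite) auto
  also have "\<dots> \<le> (\<Sum>c\<in>Cgrid m. 2 * exp (- (ln (real m))\<^sup>2 / 2))"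
    using bad_le by (intro sum_mono) auto
  also have "\<dots> = real (card (Cgrid m)) * (2 * exp (- (ln (real m))\<^sup>2 / 2))" by simp
  also have "\<dots> \<le> real m ^ 6 * (2 * exp (- (ln (real m))\<^sup>2 / 2))"
    using card_Cgrid[of m] by (intro mult_right_mono) (auto simp flip: of_nat_power)
  finally have U: "measure M (\<Union>c\<in>Cgrid m. bad c) \<le> 2 * real m ^ 6 * exp (- (ln (real m))\<^sup>2 / 2)"
    by (simp add: mult_ac)
  have "measure M E = 1 - measure M (\<Union>c\<in>Cgrid m. bad c)"
    unfolding E using fin badm by (intro M.prob_compl) auto
  then show ?thesis using U unfolding OM B_def[symmetric] E_def by simp
qed

lemma lim_aux: "(\<lambda>m. 1 - 2 * real m ^ 6 * exp (- (ln (real m))\<^sup>2 / 2)) \<longlonglongrightarrow> 1"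
  by real_asymp

lemma nqueries_pos: "m \<ge> 2 \<Longrightarrow> nqueries m D > 0"
proof -
  assume m: "m \<ge> 2"
  have l: "ln (real m) > 0" using m by simp
  have "0 \<le> 15 * (real m powr (3/2) / D ^ 2) * ln (real m)" using l by simp
  moreover have "(ln (real m))\<^sup>2 > 0" using l by simp
  ultimately have "0 < 15 * (real m powr (3/2) / D ^ 2) * ln (real m) + (ln (real m))^2" by linarith
  then have "1 \<le> \<lceil>15 * (real m powr (3/2) / D ^ 2) * ln (real m) + (ln (real m))^2\<rceil>"
    by (simp only: one_le_ceiling)
  then show ?thesis unfolding nqueries_def using m by simp
qed

theorem lemma8:
  fixes ua ub :: "nat \<Rightarrow> nat \<Rightarrow> real" and \<Delta> :: "nat \<Rightarrow> real"
  assumes util: "\<And>m i. i < m \<Longrightarrow> 0 \<le> ua m i \<and> ua m i \<le> 1 \<and> 0 \<le> ub m i \<and> ub m i \<le> 1"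
    and envy_gap: "\<forall>\<^sub>F m in sequentially.
          Min ((\<lambda>A. envy m (ua m) (ub m) A) ` Pow {..<m}) \<le> - \<Delta> m"
    and Delta_lower: "\<forall>\<^sub>F m in sequentially. \<Delta> m \<ge> real m powr (1/4) * (ln (real m))^2"
    and Delta_upper: "\<Delta> \<in> o(\<lambda>m. real m / ln (real m))"
  shows "(\<lambda>m. measure (obs_measure m (ua m) (ub m) (nqueries m (\<Delta> m)))
            {\<omega> \<in> space (obs_measure m (ua m) (ub m) (nqueries m (\<Delta> m))).
               \<forall>c\<in>Cgrid m.
                 \<bar>gfun m (ua m) (ub m) (\<lambda>i. fst (\<omega> i)) (\<lambda>i. snd (\<omega> i)) c\<bar>
                   \<le> real m / sqrt (nqueries m (\<Delta> m)) * ln (real m)})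
         \<longlonglongrightarrow> 1"
proof (rule tendsto_sandwich[OF _ _ lim_aux tendsto_const])
  show "\<forall>\<^sub>F m in sequentially. 1 - 2 * real m ^ 6 * exp (- (ln (real m))\<^sup>2 / 2) \<le>
     measure (obs_measure m (ua m) (ub m) (nqueries m (\<Delta> m)))
            {\<omega> \<in> space (obs_measure m (ua m) (ub m) (nqueries m (\<Delta> m))).
               \<forall>c\<in>Cgrid m.
                 \<bar>gfun m (ua m) (ub m) (\<lambda>i. fst (\<omega> i)) (\<lambda>i. snd (\<omega> i)) c\<bar>
                   \<le> real m / sqrt (nqueries m (\<Delta> m)) * ln (real m)}"
    using eventually_ge_at_top[of 2] by eventually_elim (rule key, simp_all add: nqueries_pos)
  show "\<forall>\<^sub>F m in sequentially. 
     measure (obs_measure m (ua m) (ub m) (nqueries m (\<Delta> m)))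
            {\<omega> \<in> space (obs_measure m (ua m) (ub m) (nqueries m (\<Delta> m))).
               \<forall>c\<in>Cgrid m.
                 \<bar>gfun m (ua m) (ub m) (\<lambda>i. fst (\<omega> i)) (\<lambda>i. snd (\<omega> i)) c\<bar>
                   \<le> real m / sqrt (nqueries m (\<Delta> m)) * ln (real m)} \<le> 1"
    using eventually_ge_at_top[of 2]
  proof eventually_elim
    case (elim m)
    have "sqrt (real m / nqueries m (\<Delta> m)) > 0" using elim nqueries_pos[OF elim] by simp
    then have "prob_space (obs_measure m (ua m) (ub m) (nqueries m (\<Delta> m)))"
      unfolding obs_measure_def by (intro prob_space_PiM prob_space_pair prob_space_normal_density)
    then show ?case by (rule prob_space.prob_le_1)
  qed
qed

end
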